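(* For every $n\ge1$, $\mathbb P(I_n=1)\ge\frac12$, and the inequality is strict for every $n\ge2$.
   Context: Let $\mathcal X=\{A,B,C,D\}$ and let $(X_i)_{i\ge1}$ be the first-order Markov chain on $\mathcal X$ with $\mathbb P(X_1=x)=1/4$ for all $x$ and transitions: from $A$ to $A$ or $C$ w.p. $1/2$ each; from $B$ to $B$ or $D$ w.p. $1/2$ each; from $C$ and from $D$ to each of $A,B,C,D$ w.p. $1/4$. A nonempty string is admissible if all consecutive transitions have positive probability; $\mathcal A$ is the set of admissible nonempty strings; $K(u):=-\log_2\mathbb P(X_1^m=u)$ for $u=x_1^m\in\mathcal A$. Shortlex source code $C$: order nonempty binary strings by length then lexicographically as $b_1,b_2,\dots$; order $\mathcal A$ as $u_1,u_2,\dots$ by increasing $K$, then increasing length, then lexicographically with $A<B<C<D$; set $C(u_j):=b_j$ (the code $C$ is distinct from the symbol $C$). Let $K_n:=K(X_1^n)$, $L_n:=|C(X_1^n)|$ and $I_n:=\mathbf 1\{L_n=K_n-1\}$. *)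

theory Defs
  imports Complex_Main
begin

datatype sym = A | B | C | D

fun sym_idx :: "sym \<Rightarrow> nat" where
  "sym_idx A = 0" | "sym_idx B = 1" | "sym_idx C = 2" | "sym_idx D = 3"

definition init :: "sym \<Rightarrow> real" where
  "init x = 1/4"

fun trans :: "sym \<Rightarrow> sym \<Rightarrow> real" where
  "trans A y = (if y = A \<or> y = C then 1/2 else 0)"
| "trans B y = (if y = B \<or> y = D then 1/2 else 0)"
| "trans C y = 1/4"
| "trans D y = 1/4"

fun path_prob :: "sym \<Rightarrow> sym list \<Rightarrow> real" where
  "path_prob x [] = 1"
| "path_prob x (y # ys) = trans x y * path_prob y ys"

fun str_prob :: "sym list \<Rightarrow> real" where
  "str_prob [] = 1"
| "str_prob (x # xs) = init x * path_prob x xs"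

definition admissible :: "sym list \<Rightarrow> bool" where
  "admissible u \<longleftrightarrow> u \<noteq> [] \<and> (\<forall>i. Suc i < length u \<longrightarrow> trans (u ! i) (u ! Suc i) > 0)"

definition Kc :: "sym list \<Rightarrow> real" where
  "Kc u = - log 2 (str_prob u)"

definition sym_lex_less :: "sym list \<Rightarrow> sym list \<Rightarrow> bool" where
  "sym_lex_less v u \<longleftrightarrow> (map sym_idx v, map sym_idx u) \<in> lexord {(a, b). a < b}"

definition adm_prec :: "sym list \<Rightarrow> sym list \<Rightarrow> bool" where
  "adm_prec v u \<longleftrightarrow> Kc v < Kc u \<or> (Kc v = Kc u \<and> (length v < length u \<or>
      (length v = length u \<and> sym_lex_less v u)))"

definition adm_index :: "sym list \<Rightarrow> nat" where
  "adm_index u = card {v. admissible v \<and> adm_prec v u} + 1"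

text \<open>Shortlex order on binary strings (False = 0 < True = 1).\<close>
definition bin_prec :: "bool list \<Rightarrow> bool list \<Rightarrow> bool" where
  "bin_prec v w \<longleftrightarrow> length v < length w \<or>
     (length v = length w \<and> (v, w) \<in> lexord {(a, b). a < b})"

definition bin_index :: "bool list \<Rightarrow> nat" where
  "bin_index w = card {v. v \<noteq> [] \<and> bin_prec v w} + 1"

text \<open>The shortlex source code: C(u_j) = b_j.\<close>
definition code :: "sym list \<Rightarrow> bool list" where
  "code u = (THE w. w \<noteq> [] \<and> bin_index w = adm_index u)"

text \<open>I_n = 1 iff L_n = K_n - 1, where L_n = |C(X_1^n)| and K_n = K(X_1^n);
  its probability is the sum of P(X_1^n = u) over (admissible) u of length n with this property.\<close>
definition prob_I :: "nat \<Rightarrow> real" where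
  "prob_I n = (\<Sum>u\<in>{u. length u = n \<and> admissible u}.
      if real (length (code u)) = Kc u - 1 then str_prob u else 0)"

end

theory Submission
  imports Defs
begin

definition TT :: "nat \<Rightarrow> nat \<Rightarrow> nat" where
  "TT h j = ((h - j) choose j) * 2 ^ j"

definition Hd :: "nat \<Rightarrow> nat \<Rightarrow> nat" where
  "Hd h i = (\<Sum>j<i. TT h j)"

definition JJ :: "nat \<Rightarrow> nat" where
  "JJ h = Hd h (Suc h)"

definition HB :: "nat \<Rightarrow> nat \<Rightarrow> nat" where
  "HB t i = (\<Sum>b<i. t choose b)"

lemma TT_0 [simp]: "TT h 0 = 1"
  by (simp add: TT_def)

lemma TT_zero: "h < 2 * j \<Longrightarrow> TT h j = 0"
  by (simp add: TT_def)

lemma TT_pascal: "TT (Suc (Suc h)) (Suc j) = TT (Suc h) (Suc j) + 2 * TT h j"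
proof (cases "j \<le> h")
  case True
  then have e: "Suc (Suc h) - Suc j = Suc (h - j)" "Suc h - Suc j = h - j" by auto
  show ?thesis unfolding TT_def e binomial_Suc_Suc power_Suc by (simp only: add_mult_distrib add_mult_distrib2 mult.assoc mult.left_commute add.commute)
next
  case False
  then show ?thesis by (simp add: TT_def)
qed

lemma Hd_pascal: "Hd (Suc (Suc h)) (Suc i) = Hd (Suc h) (Suc i) + 2 * Hd h i"
  unfolding Hd_def sum.lessThan_Suc_shift by (simp add: TT_pascal sum.distrib sum_distrib_left)

lemma Hd_const: "h < 2 * i \<Longrightarrow> Hd h (i + d) = Hd h i"
  by (induction d) (auto simp: Hd_def TT_zero)

lemma Hd_J: "h < 2 * i \<Longrightarrow> Hd h i = JJ h"
proof -
  assume a: "h < 2 * i"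
  show ?thesis
  proof (cases "i \<le> Suc h")
    case True
    then obtain d where "Suc h = i + d" using le_Suc_ex by blast
    then show ?thesis unfolding JJ_def using Hd_const[OF a] by simp
  next
    case False
    then obtain d where "i = Suc h + d" by (metis le_Suc_ex nat_le_linear)
    then show ?thesis unfolding JJ_def using Hd_const[of h "Suc h" d] by simp
  qed
qed

lemma JJ_rec: "JJ (Suc (Suc h)) = JJ (Suc h) + 2 * JJ h"
proof -
  have "Hd (Suc (Suc h)) (Suc (Suc h)) = Hd (Suc h) (Suc (Suc h)) + 2 * Hd h (Suc h)"
    by (rule Hd_pascal)
  moreover have "Hd (Suc (Suc h)) (Suc (Suc h)) = JJ (Suc (Suc h))" by (rule Hd_J) simp
  moreover have "Hd (Suc h) (Suc (Suc h)) = JJ (Suc h)" by (rule Hd_J) simp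
  moreover have "Hd h (Suc h) = JJ h" by (simp add: JJ_def)
  ultimately show ?thesis by simp
qed

lemma JJ_0 [simp]: "JJ 0 = 1" by (simp add: JJ_def Hd_def)
lemma JJ_1 [simp]: "JJ (Suc 0) = 1" by (simp add: JJ_def Hd_def TT_def lessThan_Suc)

lemma JJ_sum: "JJ (Suc h) + JJ h = 2 ^ Suc h"
  by (induction h) (simp_all add: JJ_rec)

lemma JJ_pos: "JJ h \<ge> 1"
proof -
  have "TT h 0 \<le> (\<Sum>j<Suc h. TT h j)" by (rule member_le_sum) auto
  then show ?thesis unfolding JJ_def Hd_def by simp
qed

lemma JJ_less: "JJ h < 2 ^ Suc h"
proof (cases h)
  case 0 then show ?thesis by simp
next
  case (Suc k) then show ?thesis using JJ_sum[of k] JJ_pos[of k] by simp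
qed

lemma HB_pascal: "HB (Suc t) (Suc i) = HB t (Suc i) + HB t i"
  unfolding HB_def sum.lessThan_Suc_shift by (simp add: sum.distrib)

lemma HB_0t [simp]: "HB 0 (Suc i) = 1"
  unfolding HB_def by (induction i) auto

lemma Hd_1 [simp]: "Hd h (Suc 0) = 1" by (simp add: Hd_def)
lemma HB_1 [simp]: "HB t (Suc 0) = 1" by (simp add: HB_def)
lemma Hd_0 [simp]: "Hd h 0 = 0" by (simp add: Hd_def)
lemma HB_0 [simp]: "HB t 0 = 0" by (simp add: HB_def)

lemma star: "i \<le> Suc h \<Longrightarrow> Hd (Suc h) i + Hd h i = 2 ^ i * HB (Suc h - i) i"
proof (induction h arbitrary: i rule: less_induct)
  case (less h)
  show ?case
  proof (cases i)
    case 0 then show ?thesis by simp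
  next
    case (Suc i')
    show ?thesis
    proof (cases "i' = h")
      case True
      have "Hd (Suc h) i = JJ (Suc h)" using Suc True by (intro Hd_J) simp
      moreover have "Hd h i = JJ h" using Suc True by (intro Hd_J) simp
      moreover have "HB (Suc h - i) i = 1" using Suc True by simp
      ultimately show ?thesis using Suc True JJ_sum[of h] by simp
    next
      case False
      then have i'h: "i' < h" using less.prems Suc by simp
      show ?thesis
      proof (cases i')
        case 0 then show ?thesis using Suc by simp
      next
        case (Suc i'')
        then have "2 \<le> h" using i'h by simp
        then obtain g where hg: "h = Suc (Suc g)" by (metis add_2_eq_Suc le_Suc_ex)
        have p1: "Hd (Suc h) (Suc i') = Hd h (Suc i') + 2 * Hd (Suc g) i'"
          unfolding hg by (rule Hd_pascal)
        have p2: "Hd h (Suc i') = Hd (Suc g) (Suc i') + 2 * Hd g i'"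
          unfolding hg by (rule Hd_pascal)
        have c1: "Suc g < h" "Suc i' \<le> Suc (Suc g)" using hg i'h by auto
        have ih1: "Hd (Suc (Suc g)) (Suc i') + Hd (Suc g) (Suc i') = 2 ^ Suc i' * HB (Suc (Suc g) - Suc i') (Suc i')"
          by (rule less.IH[OF c1])
        have c2: "g < h" "i' \<le> Suc g" using hg i'h by auto
        have ih2: "Hd (Suc g) i' + Hd g i' = 2 ^ i' * HB (Suc g - i') i'"
          by (rule less.IH[OF c2])
        define t where "t = Suc g - i'"
        have t2: "Suc (Suc g) - Suc i' = t" "Suc h - Suc i' = Suc t" using t_def hg i'h by auto
        have "Hd (Suc h) i + Hd h i = (Hd h (Suc i') + Hd (Suc g) (Suc i')) + 2 * (Hd (Suc g) i' + Hd g i')"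
          using p1 p2 \<open>i = Suc i'\<close> by simp
        also have "\<dots> = 2 ^ Suc i' * HB t (Suc i') + 2 * (2 ^ i' * HB t i')"
          using ih1 ih2 t2 hg t_def by simp
        also have "\<dots> = 2 ^ Suc i' * (HB t (Suc i') + HB t i')"
          by (simp add: distrib_left)
        also have "\<dots> = 2 ^ i * HB (Suc h - i) i"
          using HB_pascal[of t i'] t2 \<open>i = Suc i'\<close> by simp
        finally show ?thesis .
      qed
    qed
  qed
qed

lemma HB_full: "t < m \<Longrightarrow> HB t m = 2 ^ t"
proof -
  assume a: "t < m"
  have "HB t m = (\<Sum>b<Suc t. t choose b) + (\<Sum>b\<in>{Suc t..<m}. t choose b)"
    unfolding HB_def using a by (subst sum.atLeastLessThan_concat[of 0 "Suc t" m, simplified lessThan_atLeast0[symmetric], symmetric]) (auto simp: lessThan_atLeast0)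
  also have "(\<Sum>b\<in>{Suc t..<m}. t choose b) = 0" by simp
  finally show ?thesis using choose_row_sum[of t] by (simp add: lessThan_Suc_atMost)
qed

lemma HB_refl: "m \<le> Suc t \<Longrightarrow> HB t m + HB t (Suc t - m) = 2 ^ t"
proof -
  assume a: "m \<le> Suc t"
  have "2 ^ t = (\<Sum>b<Suc t. t choose b)" using choose_row_sum[of t] by (simp add: lessThan_Suc_atMost)
  also have "\<dots> = HB t m + (\<Sum>b\<in>{m..<Suc t}. t choose b)"
    unfolding HB_def using a by (metis atLeast0LessThan sum.atLeastLessThan_concat zero_le)
  also have "(\<Sum>b\<in>{m..<Suc t}. t choose b) = HB t (Suc t - m)"
    unfolding HB_def
  proof (rule sum.reindex_bij_witness[where i="\<lambda>c. t - c" and j="\<lambda>b. t - b"])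
    fix b assume "b \<in> {m..<Suc t}"
    then show "t choose (t - b) = t choose b" using binomial_symmetric[of b t] by simp
  qed auto
  finally show ?thesis by simp
qed

definition EE :: "nat \<Rightarrow> nat \<Rightarrow> int" where
  "EE h i = 2 * int (Hd h i) - int (JJ h)"

definition BB :: "nat \<Rightarrow> nat \<Rightarrow> int" where
  "BB t i = 2 * int (HB t i) - 2 ^ t"

lemma E_step: "EE h (Suc i) = EE h i + 2 * int (TT h i)"
  by (simp add: EE_def Hd_def)

lemma E_sum: "i \<le> Suc h \<Longrightarrow> EE (Suc h) i + EE h i = 2 ^ i * BB (Suc h - i) i"
proof -
  assume a: "i \<le> Suc h"
  have s: "int (Hd (Suc h) i) + int (Hd h i) = 2 ^ i * int (HB (Suc h - i) i)"
    using star[OF a] by (metis of_nat_add of_nat_mult of_nat_numeral of_nat_power)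
  have j: "int (JJ (Suc h)) + int (JJ h) = 2 ^ Suc h"
    using JJ_sum[of h] by (metis of_nat_add of_nat_numeral of_nat_power)
  have p: "(2::int) ^ Suc h = 2 ^ i * 2 ^ (Suc h - i)"
    using a by (simp flip: power_add)
  show ?thesis unfolding EE_def BB_def using s j p by (simp add: algebra_simps)
qed

lemma BB_pascal: "BB (Suc t) (Suc i) = BB t (Suc i) + BB t i"
  unfolding BB_def HB_pascal by simp

lemma HB_mono: "a \<le> b \<Longrightarrow> HB t a \<le> HB t b"
  unfolding HB_def by (rule sum_mono2) auto

lemma BB_nonneg: "t < 2 * m \<Longrightarrow> BB t m \<ge> 0"
proof (cases "m \<le> Suc t")
  case True
  assume "t < 2 * m"
  then have "HB t (Suc t - m) \<le> HB t m" by (intro HB_mono) simp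
  then have "2 ^ t \<le> 2 * HB t m" using HB_refl[OF True] by linarith
  then have "int (2 ^ t) \<le> int (2 * HB t m)" by (simp only: of_nat_le_iff)
  then show ?thesis unfolding BB_def by simp
next
  case False
  then show ?thesis using HB_full[of t m] unfolding BB_def by simp
qed

lemma BB_odd: "BB (2 * m + 1) (m + 1) = 0"
proof -
  have "HB (2*m+1) (m+1) + HB (2*m+1) (Suc (2*m+1) - (m+1)) = 2 ^ (2*m+1)"
    by (rule HB_refl) simp
  moreover have "Suc (2*m+1) - (m+1) = m + 1" by simp
  ultimately have "2 * HB (2*m+1) (m+1) = 2 ^ (2*m+1)" by simp
  then have "2 * int (HB (2*m+1) (m+1)) = 2 ^ (2*m+1)"
    by (metis of_nat_mult of_nat_numeral of_nat_power)
  then show ?thesis unfolding BB_def by simp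
qed

lemma BB_even: "BB (2 * p) p = - int (2 * p choose p)"
proof -
  have "HB (2*p) p + HB (2*p) (Suc (2*p) - p) = 2 ^ (2*p)"
    by (rule HB_refl) simp
  moreover have "Suc (2*p) - p = Suc p" by simp
  moreover have "HB (2*p) (Suc p) = HB (2*p) p + (2*p choose p)" by (simp add: HB_def)
  ultimately have "2 * HB (2*p) p + (2*p choose p) = 2 ^ (2*p)" by simp
  then have "2 * int (HB (2*p) p) + int (2*p choose p) = 2 ^ (2*p)"
    by (metis of_nat_add of_nat_mult of_nat_numeral of_nat_power)
  then show ?thesis unfolding BB_def by simp
qed

lemma BB_0 [simp]: "BB 0 (Suc i) = 1"
  by (simp add: BB_def)

lemma EE_low: "h < i \<Longrightarrow> EE h i = int (JJ h)"
  unfolding EE_def using Hd_J[of h i] by simp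

lemma P1_aux: "d \<le> 2 * i0 + 1 \<Longrightarrow> 0 < EE (i0 + d) (Suc i0) \<and>
   (d \<le> 2 * i0 \<longrightarrow> EE (i0 + d) (Suc i0) < 2 ^ Suc i0 * BB d (Suc i0))"
proof (induction d)
  case 0
  have e: "EE i0 (Suc i0) = int (JJ i0)" by (rule EE_low) simp
  have "JJ i0 < 2 ^ Suc i0" by (rule JJ_less)
  then have "int (JJ i0) < 2 ^ Suc i0" by (metis of_nat_less_iff of_nat_numeral of_nat_power)
  then show ?case using e JJ_pos[of i0] by simp
next
  case (Suc d)
  then have ih: "0 < EE (i0 + d) (Suc i0)" "EE (i0 + d) (Suc i0) < 2 ^ Suc i0 * BB d (Suc i0)" by auto
  have es: "EE (Suc (i0 + d)) (Suc i0) + EE (i0 + d) (Suc i0) = 2 ^ Suc i0 * BB (Suc (i0 + d) - Suc i0) (Suc i0)"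
    by (rule E_sum) simp
  have "Suc (i0 + d) - Suc i0 = d" by simp
  then have es2: "EE (i0 + Suc d) (Suc i0) = 2 ^ Suc i0 * BB d (Suc i0) - EE (i0 + d) (Suc i0)"
    using es by simp
  have pos: "0 < EE (i0 + Suc d) (Suc i0)" using es2 ih by simp
  moreover have "Suc d \<le> 2 * i0 \<longrightarrow> EE (i0 + Suc d) (Suc i0) < 2 ^ Suc i0 * BB (Suc d) (Suc i0)"
  proof
    assume "Suc d \<le> 2 * i0"
    then have "BB d i0 \<ge> 0" by (intro BB_nonneg) simp
    then have "BB d (Suc i0) \<le> BB (Suc d) (Suc i0)" using BB_pascal[of d i0] by simp
    then have m: "2 ^ Suc i0 * BB d (Suc i0) \<le> 2 ^ Suc i0 * BB (Suc d) (Suc i0)"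
      by (intro mult_left_mono) simp_all
    show "EE (i0 + Suc d) (Suc i0) < 2 ^ Suc i0 * BB (Suc d) (Suc i0)" using es2 ih m by linarith
  qed
  ultimately show ?case by blast
qed

lemma P1: "1 \<le> i \<Longrightarrow> h + 2 \<le> 3 * i \<Longrightarrow> EE h i > 0"
proof -
  assume a: "1 \<le> i" "h + 2 \<le> 3 * i"
  define i0 where "i0 = i - 1"
  have i0: "i = Suc i0" using a(1) i0_def by simp
  show ?thesis
  proof (cases "h < i")
    case True
    then show ?thesis using EE_low JJ_pos[of h] by simp
  next
    case False
    define d where "d = h - i0"
    have hd: "h = i0 + d" using False i0 d_def by simp
    have "d \<le> 2 * i0 + 1" using a i0 hd by simp
    then show ?thesis using P1_aux[of d i0] i0 hd by simp
  qed
qed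

lemma TT_diag: "TT (N + i) i = (N choose i) * 2 ^ i"
  by (simp add: TT_def)

lemma P2: "int (TT (3 * p) p) \<le> EE (3 * p) (Suc p) \<and> (1 \<le> p \<longrightarrow> int (TT (3 * p) p) < EE (3 * p) (Suc p))"
proof (cases "p = 0")
  case True
  then show ?thesis by (simp add: EE_def Hd_def)
next
  case False
  have h1: "Suc (3*p-1) = 3*p" and h2: "3*p - p = 2*p" using False by auto
  have "EE (Suc (3*p-1)) p + EE (3*p-1) p = 2^p * BB (Suc (3*p-1) - p) p"
    by (rule E_sum) (simp add: h1)
  then have e1: "EE (3*p) p + EE (3*p-1) p = - (2^p * int (2 * p choose p))"
    unfolding h1 h2 BB_even by simp
  have h3: "Suc (3*p-2) = 3*p-1" and h4: "3*p-1 - p = 2*(p-1)+1" and h5: "p = (p-1)+1" using False by auto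
  have "EE (Suc (3*p-2)) p + EE (3*p-2) p = 2^p * BB (Suc (3*p-2) - p) p"
    by (rule E_sum) (simp add: h3)
  then have e2: "EE (3*p-1) p + EE (3*p-2) p = 0"
    unfolding h3 h4 using BB_odd[of "p-1"] h5 by simp
  have "EE (3*p-2) p > 0" by (rule P1) (use False in simp_all)
  moreover have "TT (3 * p) p = (2 * p choose p) * 2 ^ p" using TT_diag[of "2*p" p] by simp
  moreover have "EE (3*p) (Suc p) = EE (3*p) p + 2 * int (TT (3*p) p)" by (rule E_step)
  ultimately show ?thesis using e1 e2 by (simp add: algebra_simps)
qed

lemma P3: "EE (3 * p + 2) (Suc p) + EE (3 * p + 1) (Suc p) = 0"
proof -
  have "EE (Suc (3*p+1)) (Suc p) + EE (3*p+1) (Suc p) = 2 ^ Suc p * BB (Suc (3*p+1) - Suc p) (Suc p)"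
    by (rule E_sum) simp
  moreover have "Suc (3*p+1) - Suc p = 2 * p + 1" by simp
  ultimately show ?thesis using BB_odd[of p] by simp
qed

fun bval :: "bool list \<Rightarrow> nat" where
  "bval [] = 0"
| "bval (a # w) = (if a then 2 ^ length w else 0) + bval w"

lemma bval_less: "bval w < 2 ^ length w"
  by (induction w) auto

lemma fin_len: "finite {v::bool list. length v = L}"
  using finite_lists_length_eq[of "UNIV::bool set" L] by simp

lemma card_len: "card {v::bool list. length v = L} = 2 ^ L"
  using card_lists_length_eq[of "UNIV::bool set" L] by simp

lemma fin_le: "finite {v::bool list. length v \<le> L}"
  using finite_lists_length_le[of "UNIV::bool set" L] by simp

lemma card_shorter: "1 \<le> L \<Longrightarrow> card {v::bool list. v \<noteq> [] \<and> length v < L} = 2 ^ L - 2"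
proof (induction L rule: dec_induct)
  case base
  have "{v::bool list. v \<noteq> [] \<and> length v < 1} = {}" by auto
  then show ?case by simp
next
  case (step L)
  have e: "{v::bool list. v \<noteq> [] \<and> length v < Suc L} =
      {v. v \<noteq> [] \<and> length v < L} \<union> {v. length v = L}" using step(1) by auto
  have f1: "finite {v::bool list. v \<noteq> [] \<and> length v < L}"
    by (rule finite_subset[OF _ fin_le[of L]]) auto
  have "card {v::bool list. v \<noteq> [] \<and> length v < Suc L} = (2 ^ L - 2) + 2 ^ L"
    unfolding e by (subst card_Un_disjoint) (auto simp: f1 fin_len card_len step(3))
  moreover have "(2::nat) ^ 1 \<le> 2 ^ L" by (rule power_increasing) (use step(1) in simp_all)
  ultimately show ?case by simp
qed

lemma card_lex: assumes R: "\<And>a b. (a, b) \<in> R \<longleftrightarrow> \<not> a \<and> b"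
  shows "card {v. length v = length w \<and> (v, w) \<in> lexord R} = bval w"
proof (induction w)
  case Nil
  then show ?case by simp
next
  case (Cons a w)
  let ?S = "{v. length v = length w \<and> (v, w) \<in> lexord R}"
  have e: "{v. length v = length (a # w) \<and> (v, a # w) \<in> lexord R} =
     (if a then Cons False ` {v. length v = length w} else {}) \<union> Cons a ` ?S"
  proof (intro set_eqI iffI)
    fix v assume "v \<in> {v. length v = length (a # w) \<and> (v, a # w) \<in> lexord R}"
    then obtain b v' where v: "v = b # v'" "length v' = length w" "(b # v', a # w) \<in> lexord R"
      by (cases v) auto
    then have "(b, a) \<in> R \<or> (b = a \<and> (v', w) \<in> lexord R)" by simp
    then show "v \<in> (if a then Cons False ` {v. length v = length w} else {}) \<union> Cons a ` ?S"
      using v R by auto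
  next
    fix v assume "v \<in> (if a then Cons False ` {v. length v = length w} else {}) \<union> Cons a ` ?S"
    then have "(a \<and> (\<exists>v'. v = False # v' \<and> length v' = length w)) \<or> (\<exists>v'. v = a # v' \<and> v' \<in> ?S)"
      by (cases a) auto
    then show "v \<in> {v. length v = length (a # w) \<and> (v, a # w) \<in> lexord R}"
    proof (elim disjE exE conjE)
      fix v' assume "a" "v = False # v'" "length v' = length w"
      then show ?thesis using R[of False True] by simp
    next
      fix v' assume "v = a # v'" "v' \<in> ?S"
      then show ?thesis by simp
    qed
  qed
  have fS: "finite ?S" by (rule finite_subset[OF _ fin_len[of "length w"]]) auto
  show ?case
  proof (cases a)
    case True
    have "card ((Cons False ` {v. length v = length w}) \<union> Cons True ` ?S) =
        card (Cons False ` {v. length v = length w}) + card (Cons True ` ?S)"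
      by (rule card_Un_disjoint) (auto simp: fin_len fS)
    also have "\<dots> = 2 ^ length w + bval w"
      by (simp add: card_image card_len Cons.IH)
    finally show ?thesis unfolding e using True by simp
  next
    case False
    have "card (Cons a ` ?S) = bval w" by (simp add: card_image Cons.IH)
    then show ?thesis unfolding e using False by simp
  qed
qed

lemma bin_index_eq: "w \<noteq> [] \<Longrightarrow> bin_index w = 2 ^ length w - 1 + bval w"
proof -
  assume w: "w \<noteq> []"
  define R where "R = {(a::bool, b). a < b}"
  have R: "\<And>a b. (a, b) \<in> R \<longleftrightarrow> \<not> a \<and> b" unfolding R_def by auto
  let ?R = R
  have e: "{v. v \<noteq> [] \<and> bin_prec v w} = {v. v \<noteq> [] \<and> length v < length w} \<union>
      {v. length v = length w \<and> (v, w) \<in> lexord ?R}"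
    unfolding bin_prec_def R_def[symmetric] using w by auto
  have f1: "finite {v::bool list. v \<noteq> [] \<and> length v < length w}"
    by (rule finite_subset[OF _ fin_le[of "length w"]]) auto
  have f2: "finite {v. length v = length w \<and> (v, w) \<in> lexord ?R}"
    by (rule finite_subset[OF _ fin_len[of "length w"]]) auto
  have "card {v. v \<noteq> [] \<and> bin_prec v w} = (2 ^ length w - 2) + bval w"
    unfolding e by (subst card_Un_disjoint) (auto simp: f1 f2 card_lex[OF R] card_shorter w Suc_leI)
  moreover have "(2::nat) ^ 1 \<le> 2 ^ length w" by (rule power_increasing) (use w in \<open>simp_all add: Suc_leI\<close>)
  ultimately show ?thesis unfolding bin_index_def by simp
qed

lemma bval_inj: "length v = length w \<Longrightarrow> bval v = bval w \<Longrightarrow> v = w"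
proof (induction v arbitrary: w)
  case Nil then show ?case by simp
next
  case (Cons a v)
  then obtain b w' where w: "w = b # w'" "length v = length w'" by (cases w) auto
  have "a = b"
  proof (rule ccontr)
    assume "a \<noteq> b"
    then show False using Cons.prems w bval_less[of v] bval_less[of w'] by (cases a) auto
  qed
  have p: "2 ^ length v = (2::nat) ^ length w'" using w(2) by simp
  have q: "bval (b # v) = bval (b # w')" using Cons.prems(2) w(1) \<open>a = b\<close> by simp
  have "bval v = bval w'"
  proof (cases b)
    case True then show ?thesis using p q by simp
  next
    case False then show ?thesis using q by simp
  qed
  then show ?case using Cons.IH w \<open>a = b\<close> by simp
qed

lemma bval_surj: "x < 2 ^ L \<Longrightarrow> \<exists>w. length w = L \<and> bval w = x"
proof (induction L arbitrary: x)
  case 0 then show ?case by simp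
next
  case (Suc L)
  show ?case
  proof (cases "x < 2 ^ L")
    case True
    then obtain w where "length w = L" "bval w = x" using Suc.IH by blast
    then show ?thesis by (intro exI[of _ "False # w"]) simp
  next
    case False
    then have "x - 2 ^ L < 2 ^ L" using Suc.prems by simp
    then obtain w where "length w = L" "bval w = x - 2 ^ L" using Suc.IH by blast
    then show ?thesis using False by (intro exI[of _ "True # w"]) simp
  qed
qed

lemma log_ex: "1 \<le> (n::nat) \<Longrightarrow> \<exists>L. 2 ^ L \<le> n \<and> n < 2 ^ Suc L"
proof (induction n rule: dec_induct)
  case base then show ?case by (intro exI[of _ 0]) simp
next
  case (step n)
  then obtain L where L: "2 ^ L \<le> n" "n < 2 ^ Suc L" by blast
  show ?case
  proof (cases "Suc n < 2 ^ Suc L")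
    case True then show ?thesis using L by (intro exI[of _ L]) simp
  next
    case False
    then have "Suc n = 2 ^ Suc L" using L by simp
    then show ?thesis by (intro exI[of _ "Suc L"]) simp
  qed
qed

lemma log_uniq: "2 ^ a \<le> (n::nat) \<Longrightarrow> n < 2 ^ Suc a \<Longrightarrow> 2 ^ b \<le> n \<Longrightarrow> n < 2 ^ Suc b \<Longrightarrow> a = b"
proof (rule ccontr)
  assume h: "2 ^ a \<le> (n::nat)" "n < 2 ^ Suc a" "2 ^ b \<le> n" "n < 2 ^ Suc b" "a \<noteq> b"
  show False
  proof (cases "a < b")
    case True
    then have "(2::nat) ^ Suc a \<le> 2 ^ b" by (intro power_increasing) simp_all
    then show False using h by simp
  next
    case False
    then have "(2::nat) ^ Suc b \<le> 2 ^ a" using h(5) by (intro power_increasing) simp_all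
    then show False using h by simp
  qed
qed

lemma bin_index_bounds: "w \<noteq> [] \<Longrightarrow> 2 ^ length w \<le> bin_index w + 1 \<and> bin_index w + 1 < 2 ^ Suc (length w)"
proof -
  assume w: "w \<noteq> []"
  have "(2::nat) ^ length w \<ge> 1" by simp
  then show ?thesis using bin_index_eq[OF w] bval_less[of w] by simp
qed

lemma code_length: "1 \<le> j \<Longrightarrow> 2 ^ L \<le> j + 1 \<Longrightarrow> j + 1 < 2 ^ Suc L \<Longrightarrow>
   length (THE w. w \<noteq> [] \<and> bin_index w = j) = L"
proof -
  assume j: "1 \<le> j" and L: "2 ^ L \<le> j + 1" "j + 1 < 2 ^ Suc L"
  have "L \<noteq> 0" using j L by (cases L) auto
  have "j + 1 - 2 ^ L < 2 ^ L" using L by simp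
  then obtain w where w: "length w = L" "bval w = j + 1 - 2 ^ L" using bval_surj by blast
  have wne: "w \<noteq> []" using w \<open>L \<noteq> 0\<close> by auto
  have bw: "bin_index w = j" using bin_index_eq[OF wne] w L by simp
  have uniq: "w' = w" if "w' \<noteq> [] \<and> bin_index w' = j" for w'
  proof -
    have bb: "2 ^ length w' \<le> j + 1" "j + 1 < 2 ^ Suc (length w')" using bin_index_bounds[of w'] that by auto
    have "length w' = L" by (rule log_uniq[OF bb L])
    moreover have "bval w' = bval w" using bin_index_eq[of w'] bin_index_eq[OF wne] that bw w calculation by simp
    ultimately show ?thesis using bval_inj w by simp
  qed
  have "(THE w. w \<noteq> [] \<and> bin_index w = j) = w"
  proof (rule the_equality)
    show "w \<noteq> [] \<and> bin_index w = j" using wne bw by simp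
  next
    fix w' assume "w' \<noteq> [] \<and> bin_index w' = j"
    then show "w' = w" by (rule uniq)
  qed
  then show ?thesis using w by simp
qed

lemma code_length_iff: "1 \<le> j \<Longrightarrow>
   length (THE w. w \<noteq> [] \<and> bin_index w = j) = L \<longleftrightarrow> (2 ^ L \<le> j + 1 \<and> j + 1 < 2 ^ Suc L)"
proof -
  assume j: "1 \<le> j"
  obtain L0 where L0: "2 ^ L0 \<le> j + 1" "j + 1 < 2 ^ Suc L0" using log_ex[of "j+1"] by auto
  have e: "length (THE w. w \<noteq> [] \<and> bin_index w = j) = L0" by (rule code_length[OF j L0])
  show ?thesis
  proof
    assume "length (THE w. w \<noteq> [] \<and> bin_index w = j) = L"
    then show "2 ^ L \<le> j + 1 \<and> j + 1 < 2 ^ Suc L" using e L0 by simp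
  next
    assume b: "2 ^ L \<le> j + 1 \<and> j + 1 < 2 ^ Suc L"
    have "L0 = L" by (rule log_uniq[OF L0 b[THEN conjunct1] b[THEN conjunct2]])
    then show "length (THE w. w \<noteq> [] \<and> bin_index w = j) = L" using e by simp
  qed
qed

fun wt :: "sym \<Rightarrow> nat" where
  "wt A = 1" | "wt B = 1" | "wt C = 2" | "wt D = 2"

fun kk :: "sym list \<Rightarrow> nat" where
  "kk [] = 0"
| "kk [x] = 2"
| "kk (x # y # r) = wt x + kk (y # r)"

lemma UNIV_sym: "(UNIV :: sym set) = {A, B, C, D}"
  using sym.exhaust by auto

lemma finite_sym: "finite (UNIV :: sym set)"
  by (simp add: UNIV_sym)

lemma adm_single [simp]: "admissible [x]"
  by (simp add: admissible_def)

lemma adm_nil [simp]: "\<not> admissible []"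
  by (simp add: admissible_def)

lemma adm_cons2: "admissible (x # y # r) \<longleftrightarrow> trans x y > 0 \<and> admissible (y # r)"
proof
  assume a: "admissible (x # y # r)"
  have "Suc 0 < length (x # y # r)" by simp
  then have "trans ((x # y # r) ! 0) ((x # y # r) ! Suc 0) > 0" using a unfolding admissible_def by blast
  then have "trans x y > 0" by simp
  moreover have "admissible (y # r)" unfolding admissible_def
  proof (intro conjI allI impI)
    fix i assume "Suc i < length (y # r)"
    then have "Suc (Suc i) < length (x # y # r)" by simp
    then have "trans ((x # y # r) ! Suc i) ((x # y # r) ! Suc (Suc i)) > 0" using a unfolding admissible_def by blast
    then show "trans ((y # r) ! i) ((y # r) ! Suc i) > 0" by simp
  qed simp
  ultimately show "trans x y > 0 \<and> admissible (y # r)" by simp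
next
  assume a: "trans x y > 0 \<and> admissible (y # r)"
  show "admissible (x # y # r)" unfolding admissible_def
  proof (intro conjI allI impI)
    fix i assume i: "Suc i < length (x # y # r)"
    show "trans ((x # y # r) ! i) ((x # y # r) ! Suc i) > 0"
    proof (cases i)
      case 0 then show ?thesis using a by simp
    next
      case (Suc i')
      then have "Suc i' < length (y # r)" using i by simp
      then have "trans ((y # r) ! i') ((y # r) ! Suc i') > 0" using a unfolding admissible_def by blast
      then show ?thesis using Suc by simp
    qed
  qed simp
qed

lemma trans_pos: "trans x y > 0 \<Longrightarrow> trans x y = (1/2) ^ wt x"
  by (cases x; cases y) (simp_all add: power2_eq_square)

lemma kk_bounds: "u \<noteq> [] \<Longrightarrow> length u + 1 \<le> kk u \<and> kk u \<le> 2 * length u"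
proof (induction u rule: kk.induct)
  case (3 x y r)
  have "1 \<le> wt x \<and> wt x \<le> 2" by (cases x) auto
  then show ?case using 3 by simp
qed simp_all

lemma kk_ge2: "u \<noteq> [] \<Longrightarrow> 2 \<le> kk u"
  using kk_bounds[of u] by (cases u) auto

lemma path_prob_adm: "admissible (x # r) \<Longrightarrow> path_prob x r = (1/2) ^ (kk (x # r) - 2)"
proof (induction r arbitrary: x)
  case Nil then show ?case by simp
next
  case (Cons y r)
  have t: "trans x y > 0" and ar: "admissible (y # r)" using Cons.prems adm_cons2 by auto
  have "path_prob x (y # r) = (1/2) ^ wt x * (1/2) ^ (kk (y # r) - 2)"
    using Cons.IH[OF ar] trans_pos[OF t] by simp
  also have "\<dots> = (1/2) ^ (wt x + (kk (y # r) - 2))" by (simp add: power_add)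
  also have "wt x + (kk (y # r) - 2) = kk (x # y # r) - 2" using kk_ge2[of "y # r"] by simp
  finally show ?case .
qed

lemma str_prob_adm: "admissible u \<Longrightarrow> str_prob u = (1/2) ^ kk u"
proof (cases u)
  case Nil
  assume "admissible u" then show ?thesis using Nil by simp
next
  case (Cons x r)
  assume a: "admissible u"
  have "str_prob u = 1/4 * (1/2) ^ (kk (x # r) - 2)" using path_prob_adm a Cons by (simp add: init_def)
  also have "\<dots> = (1/2) ^ (2 + (kk (x # r) - 2))" by (simp add: power_add)
  also have "2 + (kk (x # r) - 2) = kk u" using kk_ge2[of "x # r"] Cons by simp
  finally show ?thesis .
qed

lemma Kc_adm: "admissible u \<Longrightarrow> Kc u = real (kk u)"
proof -
  assume "admissible u"
  then have "str_prob u = (1/2) ^ kk u" by (rule str_prob_adm)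
  also have "\<dots> = inverse (2 ^ kk u)" by (simp add: power_one_over inverse_eq_divide)
  finally have "log 2 (str_prob u) = - log 2 (2 ^ kk u)" by (simp add: log_inverse)
  also have "log 2 ((2::real) ^ kk u) = real (kk u)" by simp
  finally show ?thesis unfolding Kc_def by simp
qed

definition Lev :: "nat \<Rightarrow> nat \<Rightarrow> sym list set" where
  "Lev k m = {u. admissible u \<and> length u = m \<and> kk u = k}"

lemma fin_lists: "finite {u::sym list. length u \<le> M}"
  using finite_lists_length_le[OF finite_sym, of M] by simp

lemma fin_sub: "(\<And>u. u \<in> S \<Longrightarrow> length u \<le> M) \<Longrightarrow> finite (S :: sym list set)"
  by (rule finite_subset[OF _ fin_lists[of M]]) auto

lemma fin_Lev: "finite (Lev k m)"
  by (rule fin_sub[of _ m]) (simp add: Lev_def)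

lemma fin_level: "finite {u. admissible u \<and> kk u = k \<and> Q u}"
proof (rule fin_sub[of _ k])
  fix u assume "u \<in> {u. admissible u \<and> kk u = k \<and> Q u}"
  then show "length u \<le> k" using kk_bounds[of u] by (cases u) auto
qed

lemma fin_low: "finite {u. admissible u \<and> kk u < k}"
proof (rule fin_sub[of _ k])
  fix u assume "u \<in> {u. admissible u \<and> kk u < k}"
  then show "length u \<le> k" using kk_bounds[of u] by (cases u) auto
qed

definition alpha :: "nat \<Rightarrow> nat \<Rightarrow> nat" where
  "alpha t j = (if t = 0 then (if j = 0 then 1 else 0) else 2 * ((t - 1) choose j) * 2 ^ j)"

definition gamma :: "nat \<Rightarrow> nat \<Rightarrow> nat" where
  "gamma t j = (if t = 0 then (if j = 0 then 1 else 0) else if j = 0 then 0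
      else 2 * ((t - 1) choose (j - 1)) * 2 ^ j)"

definition FF :: "sym \<Rightarrow> nat \<Rightarrow> nat \<Rightarrow> nat" where
  "FF x t j = (if wt x = 1 then alpha t j else gamma t j)"

lemma ag_sum: "alpha t j + gamma t j = 2 * (t choose j) * 2 ^ j"
proof (cases t)
  case 0 then show ?thesis by (simp add: alpha_def gamma_def)
next
  case (Suc t')
  show ?thesis
  proof (cases j)
    case 0 then show ?thesis using Suc by (simp add: alpha_def gamma_def)
  next
    case (Suc j')
    have "alpha t j + gamma t j = 2 * 2 ^ j * ((t' choose Suc j') + (t' choose j'))"
      using \<open>t = Suc t'\<close> Suc by (simp add: alpha_def gamma_def algebra_simps)
    also have "(t' choose Suc j') + (t' choose j') = t choose j"
      using \<open>t = Suc t'\<close> Suc by simp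
    finally show ?thesis by simp
  qed
qed

definition Rset :: "sym \<Rightarrow> nat \<Rightarrow> nat \<Rightarrow> sym \<Rightarrow> sym list set" where
  "Rset x t K y = {r. admissible r \<and> length r = Suc t \<and> wt x + kk r = K \<and> hd r = y}"

lemma step_set: "{u. admissible u \<and> length u = Suc (Suc t) \<and> kk u = K \<and> hd u = x} =
   Cons x ` (\<Union>y\<in>{y. trans x y > 0}. Rset x t K y)"
proof (intro set_eqI iffI)
  fix u assume "u \<in> {u. admissible u \<and> length u = Suc (Suc t) \<and> kk u = K \<and> hd u = x}"
  then obtain y r where u: "u = x # y # r" "admissible (x # y # r)" "length r = t" "kk (x # y # r) = K"
    by (cases u; cases "tl u") auto
  then have "trans x y > 0" "admissible (y # r)" using adm_cons2 by auto
  then show "u \<in> Cons x ` (\<Union>y\<in>{y. trans x y > 0}. Rset x t K y)"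
    using u unfolding Rset_def by auto
next
  fix u assume "u \<in> Cons x ` (\<Union>y\<in>{y. trans x y > 0}. Rset x t K y)"
  then obtain y r where u: "u = x # r" "trans x y > 0" "admissible r" "length r = Suc t" "wt x + kk r = K" "hd r = y"
    unfolding Rset_def by auto
  then obtain r' where r': "r = y # r'" by (cases r) auto
  show "u \<in> {u. admissible u \<and> length u = Suc (Suc t) \<and> kk u = K \<and> hd u = x}"
    using u r' adm_cons2 by auto
qed

lemma step_card: "card {u. admissible u \<and> length u = Suc (Suc t) \<and> kk u = K \<and> hd u = x} =
   (\<Sum>y\<in>{y. trans x y > 0}. card (Rset x t K y))"
proof -
  have fin: "finite (Rset x t K y)" for y by (rule fin_sub[of _ "Suc t"]) (simp add: Rset_def)
  have "card (Cons x ` (\<Union>y\<in>{y. trans x y > 0}. Rset x t K y)) = card (\<Union>y\<in>{y. trans x y > 0}. Rset x t K y)"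
    by (rule card_image) simp
  also have "\<dots> = (\<Sum>y\<in>{y. trans x y > 0}. card (Rset x t K y))"
  proof (rule card_UN_disjoint)
    show "finite {y. trans x y > 0}" by (rule finite_subset[OF _ finite_sym]) simp
    show "\<forall>i\<in>{y. trans x y > 0}. finite (Rset x t K i)" using fin by simp
    show "\<forall>i\<in>{y. trans x y > 0}. \<forall>j\<in>{y. trans x y > 0}. i \<noteq> j \<longrightarrow> Rset x t K i \<inter> Rset x t K j = {}"
      by (auto simp: Rset_def)
  qed
  finally show ?thesis unfolding step_set .
qed

lemma cnt_hd: "card {u. admissible u \<and> length u = Suc t \<and> kk u = t + j + 2 \<and> hd u = x} = FF x t j"
proof (induction t arbitrary: j x)
  case 0
  show ?case
  proof (cases "j = 0")
    case True
    have e: "{u. admissible u \<and> length u = Suc 0 \<and> kk u = 0 + j + 2 \<and> hd u = x} = {[x]}"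
      using True by (auto simp: length_Suc_conv)
    have "card {u. admissible u \<and> length u = Suc 0 \<and> kk u = 0 + j + 2 \<and> hd u = x} = 1"
      unfolding e by simp
    then show ?thesis using True by (cases x) (simp_all add: FF_def alpha_def gamma_def)
  next
    case False
    have e: "{u. admissible u \<and> length u = Suc 0 \<and> kk u = 0 + j + 2 \<and> hd u = x} = {}"
      using False by (auto simp: length_Suc_conv)
    have "card {u. admissible u \<and> length u = Suc 0 \<and> kk u = 0 + j + 2 \<and> hd u = x} = 0"
      unfolding e by simp
    then show ?thesis using False by (cases x) (simp_all add: FF_def alpha_def gamma_def)
  qed
next
  case (Suc t)
  have R1: "Rset x t (Suc t + j + 2) y = {u. admissible u \<and> length u = Suc t \<and> kk u = t + j + 2 \<and> hd u = y}"
    if "wt x = 1" for x y using that unfolding Rset_def by auto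
  have R2: "Rset x t (Suc t + Suc j' + 2) y = {u. admissible u \<and> length u = Suc t \<and> kk u = t + j' + 2 \<and> hd u = y}"
    if "wt x = 2" for x y j' using that unfolding Rset_def by auto
  have R3: "Rset x t (Suc t + 0 + 2) y = {}" if "wt x = 2" for x y
  proof -
    have False if r: "r \<in> Rset x t (Suc t + 0 + 2) y" for r
    proof -
      have "length r = Suc t" "kk r = Suc t" using r \<open>wt x = 2\<close> unfolding Rset_def by auto
      moreover have "r \<noteq> []" using calculation by auto
      ultimately show False using kk_bounds[of r] by simp
    qed
    then show ?thesis by blast
  qed
  have sA: "{y. trans A y > 0} = {A, C}"
  proof (rule set_eqI)
    fix y show "y \<in> {y. trans A y > 0} \<longleftrightarrow> y \<in> {A, C}" by (cases y) simp_all
  qed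
  have sB: "{y. trans B y > 0} = {B, D}"
  proof (rule set_eqI)
    fix y show "y \<in> {y. trans B y > 0} \<longleftrightarrow> y \<in> {B, D}" by (cases y) simp_all
  qed
  have sC: "{y. trans C y > 0} = {A, B, C, D}"
  proof (rule set_eqI)
    fix y show "y \<in> {y. trans C y > 0} \<longleftrightarrow> y \<in> {A, B, C, D}" by (cases y) simp_all
  qed
  have sD: "{y. trans D y > 0} = {A, B, C, D}"
  proof (rule set_eqI)
    fix y show "y \<in> {y. trans D y > 0} \<longleftrightarrow> y \<in> {A, B, C, D}" by (cases y) simp_all
  qed
  show ?case
  proof (cases x)
    case A
    have "card {u. admissible u \<and> length u = Suc (Suc t) \<and> kk u = Suc t + j + 2 \<and> hd u = x}
        = FF A t j + FF C t j" unfolding step_card A sA using R1[of A] Suc.IH by simp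
    then show ?thesis using ag_sum[of t j] A by (simp add: FF_def alpha_def gamma_def)
  next
    case B
    have "card {u. admissible u \<and> length u = Suc (Suc t) \<and> kk u = Suc t + j + 2 \<and> hd u = x}
        = FF B t j + FF D t j" unfolding step_card B sB using R1[of B] Suc.IH by simp
    then show ?thesis using ag_sum[of t j] B by (simp add: FF_def alpha_def gamma_def)
  next
    case C
    show ?thesis
    proof (cases j)
      case 0
      have "card {u. admissible u \<and> length u = Suc (Suc t) \<and> kk u = Suc t + j + 2 \<and> hd u = x} = 0"
        unfolding step_card C sC 0 using R3[of C] by simp
      then show ?thesis using C 0 by (simp add: FF_def gamma_def)
    next
      case (Suc j')
      have "card {u. admissible u \<and> length u = Suc (Suc t) \<and> kk u = Suc t + j + 2 \<and> hd u = x}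
          = FF A t j' + FF B t j' + FF C t j' + FF D t j'"
        unfolding step_card C sC Suc using R2[of C] Suc.IH by simp
      then show ?thesis using ag_sum[of t j'] C Suc by (simp add: FF_def alpha_def gamma_def)
    qed
  next
    case D
    show ?thesis
    proof (cases j)
      case 0
      have "card {u. admissible u \<and> length u = Suc (Suc t) \<and> kk u = Suc t + j + 2 \<and> hd u = x} = 0"
        unfolding step_card D sD 0 using R3[of D] by simp
      then show ?thesis using D 0 by (simp add: FF_def gamma_def)
    next
      case (Suc j')
      have "card {u. admissible u \<and> length u = Suc (Suc t) \<and> kk u = Suc t + j + 2 \<and> hd u = x}
          = FF A t j' + FF B t j' + FF C t j' + FF D t j'"
        unfolding step_card D sD Suc using R2[of D] Suc.IH by simp
      then show ?thesis using ag_sum[of t j'] D Suc by (simp add: FF_def alpha_def gamma_def)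
    qed
  qed
qed

lemma Hd_le_J: "Hd h i \<le> JJ h"
proof (cases "i \<le> Suc h")
  case True
  have "Hd h i \<le> Hd h (Suc h)" unfolding Hd_def by (rule sum_mono2) (use True in auto)
  then show ?thesis by (simp add: JJ_def)
next
  case False then show ?thesis using Hd_J[of h i] by simp
qed

lemma JJ_le: "JJ h \<le> 2 ^ h"
proof (cases h)
  case 0 then show ?thesis by simp
next
  case (Suc k) then show ?thesis using JJ_sum[of k] JJ_pos[of k] by simp
qed

lemma Hd_Suc: "Hd h (Suc i) = Hd h i + TT h i"
  by (simp add: Hd_def)

lemma cnt_Lev: "card (Lev (t + j + 2) (Suc t)) = 4 * (t choose j) * 2 ^ j"
proof -
  let ?S = "\<lambda>x. {u. admissible u \<and> length u = Suc t \<and> kk u = t + j + 2 \<and> hd u = x}"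
  have e: "Lev (t + j + 2) (Suc t) = (\<Union>x\<in>UNIV. ?S x)" unfolding Lev_def by auto
  have "card (\<Union>x\<in>UNIV. ?S x) = (\<Sum>x\<in>UNIV. card (?S x))"
  proof (rule card_UN_disjoint)
    show "finite (UNIV :: sym set)" by (rule finite_sym)
    show "\<forall>i\<in>UNIV. finite (?S i)" by (intro ballI fin_sub[of _ "Suc t"]) simp
    show "\<forall>i\<in>UNIV. \<forall>j\<in>UNIV. i \<noteq> j \<longrightarrow> ?S i \<inter> ?S j = {}" by auto
  qed
  also have "\<dots> = FF A t j + FF B t j + FF C t j + FF D t j"
    unfolding cnt_hd UNIV_sym by simp
  also have "\<dots> = 2 * (alpha t j + gamma t j)" by (simp add: FF_def)
  finally show ?thesis unfolding e ag_sum by simp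
qed

lemma Lev_empty0: "Lev k 0 = {}"
  unfolding Lev_def by auto

lemma kk_len: "admissible u \<Longrightarrow> length u + 1 \<le> kk u"
  using kk_bounds[of u] by (cases u) auto

lemma Lev_empty_big: "k < m + 1 \<Longrightarrow> Lev k m = {}"
proof -
  assume a: "k < m + 1"
  have False if u: "u \<in> Lev k m" for u
  proof -
    have "admissible u" "length u = m" "kk u = k" using u by (auto simp: Lev_def)
    then show False using kk_len[of u] a by simp
  qed
  then show ?thesis by blast
qed

lemma cnt_Lev_TT: "t \<le> h \<Longrightarrow> card (Lev (h + 2) (Suc t)) = 4 * TT h (h - t)"
proof -
  assume a: "t \<le> h"
  have "h + 2 = t + (h - t) + 2" using a by simp
  then have "card (Lev (h + 2) (Suc t)) = 4 * (t choose (h - t)) * 2 ^ (h - t)"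
    using cnt_Lev[of t "h - t"] by simp
  moreover have "h - (h - t) = t" using a by simp
  ultimately show ?thesis unfolding TT_def by simp
qed

lemma short_cnt: "card {v. admissible v \<and> kk v = h + 2 \<and> length v < n} = 4 * (JJ h - Hd h (h + 2 - n))"
proof (induction n)
  case 0
  have "Hd h (h + 2) = JJ h" by (rule Hd_J) simp
  then show ?case by simp
next
  case (Suc n)
  have e: "{v. admissible v \<and> kk v = h + 2 \<and> length v < Suc n} =
      {v. admissible v \<and> kk v = h + 2 \<and> length v < n} \<union> Lev (h + 2) n"
    unfolding Lev_def by auto
  have c: "card {v. admissible v \<and> kk v = h + 2 \<and> length v < Suc n} =
      card {v. admissible v \<and> kk v = h + 2 \<and> length v < n} + card (Lev (h + 2) n)"
    unfolding e
  proof (rule card_Un_disjoint)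
    show "finite {v. admissible v \<and> kk v = h + 2 \<and> length v < n}" by (rule fin_level)
    show "finite (Lev (h + 2) n)" by (rule fin_Lev)
    show "{v. admissible v \<and> kk v = h + 2 \<and> length v < n} \<inter> Lev (h + 2) n = {}" by (auto simp: Lev_def)
  qed
  have key: "Hd h (h + 2 - n) = Hd h (h + 2 - Suc n) + card (Lev (h + 2) n) div 4 \<and> 4 dvd card (Lev (h + 2) n)"
  proof (cases n)
    case 0
    have "TT h (Suc h) = 0" by (rule TT_zero) simp
    then show ?thesis using 0 by (simp add: Lev_empty0 Hd_Suc)
  next
    case (Suc t)
    show ?thesis
    proof (cases "t \<le> h")
      case True
      have "h + 2 - n = Suc (h - t)" "h + 2 - Suc n = h - t" using True Suc by auto
      then show ?thesis using cnt_Lev_TT[OF True] Suc by (simp add: Hd_Suc)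
    next
      case False
      have "Lev (h + 2) n = {}" by (rule Lev_empty_big) (use False Suc in simp)
      moreover have "h + 2 - n = 0" "h + 2 - Suc n = 0" using False Suc by auto
      ultimately show ?thesis by simp
    qed
  qed
  have le: "Hd h (h + 2 - n) \<le> JJ h" by (rule Hd_le_J)
  obtain k where k: "card (Lev (h + 2) n) = 4 * k" using key by (auto elim!: dvdE)
  have k2: "Hd h (h + 2 - n) = Hd h (h + 2 - Suc n) + k" using key k by simp
  have le2: "Hd h (h + 2 - Suc n) + k \<le> JJ h" using le unfolding k2 .
  have ar: "JJ h - Hd h (h + 2 - n) + k = JJ h - Hd h (h + 2 - Suc n)"
    unfolding k2 using le2 by simp
  have "card {v. admissible v \<and> kk v = h + 2 \<and> length v < Suc n} = 4 * (JJ h - Hd h (h + 2 - n) + k)"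
    using c Suc.IH k by simp
  then show ?case unfolding ar .
qed

lemma level_cnt: "card {v. admissible v \<and> kk v = h + 2} = 4 * JJ h"
proof -
  have "{v. admissible v \<and> kk v = h + 2} = {v. admissible v \<and> kk v = h + 2 \<and> length v < h + 2}"
  proof (intro set_eqI iffI)
    fix v assume "v \<in> {v. admissible v \<and> kk v = h + 2}"
    then show "v \<in> {v. admissible v \<and> kk v = h + 2 \<and> length v < h + 2}" using kk_len[of v] by simp
  qed simp
  then show ?thesis using short_cnt[of h "h + 2"] by simp
qed

lemma low_cnt: "card {v. admissible v \<and> kk v < h + 2} + 2 + 2 * JJ h = 2 ^ (h + 2)"
proof (induction h)
  case 0
  have e0: "{v. admissible v \<and> kk v < 0 + 2} = {}"
  proof -
    have False if "admissible v" "kk v < 0 + 2" for v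
    proof -
      have "v \<noteq> []" using that(1) by auto
      then show False using kk_ge2[of v] that(2) by simp
    qed
    then show ?thesis by blast
  qed
  show ?case unfolding e0 by simp
next
  case (Suc h)
  have e: "{v. admissible v \<and> kk v < Suc h + 2} = {v. admissible v \<and> kk v < h + 2} \<union> {v. admissible v \<and> kk v = h + 2}"
    by auto
  have c: "card {v. admissible v \<and> kk v < Suc h + 2} = card {v. admissible v \<and> kk v < h + 2} + 4 * JJ h"
    unfolding e level_cnt[symmetric]
  proof (rule card_Un_disjoint)
    show "finite {v. admissible v \<and> kk v < h + 2}" by (rule fin_low)
    show "finite {v. admissible v \<and> kk v = h + 2}" using fin_level[where Q="\<lambda>_. True" and k="h+2"] by simp
  qed auto
  show ?case using c Suc.IH JJ_sum[of h] by simp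
qed

lemma rank_props:
  assumes fin: "finite S"
    and irr: "\<And>x. x \<in> S \<Longrightarrow> \<not> P x x"
    and tr: "\<And>x y z. x \<in> S \<Longrightarrow> y \<in> S \<Longrightarrow> z \<in> S \<Longrightarrow> P x y \<Longrightarrow> P y z \<Longrightarrow> P x z"
    and tot: "\<And>x y. x \<in> S \<Longrightarrow> y \<in> S \<Longrightarrow> x \<noteq> y \<Longrightarrow> P x y \<or> P y x"
  shows "inj_on (\<lambda>x. card {y\<in>S. P y x}) S \<and> (\<lambda>x. card {y\<in>S. P y x}) ` S = {..<card S}"
proof -
  let ?r = "\<lambda>x. card {y\<in>S. P y x}"
  have mono: "?r x < ?r y" if "x \<in> S" "y \<in> S" "P x y" for x y
  proof (rule psubset_card_mono)
    show "finite {z\<in>S. P z y}" using fin by simp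
    have "{z\<in>S. P z x} \<subseteq> {z\<in>S. P z y}" using tr that by blast
    moreover have "x \<in> {z\<in>S. P z y}" "x \<notin> {z\<in>S. P z x}" using that irr by auto
    ultimately show "{z\<in>S. P z x} \<subset> {z\<in>S. P z y}" by blast
  qed
  have inj: "inj_on ?r S"
  proof (rule inj_onI)
    fix x y assume xy: "x \<in> S" "y \<in> S" "?r x = ?r y"
    show "x = y"
    proof (rule ccontr)
      assume "x \<noteq> y"
      then have "P x y \<or> P y x" using tot xy by blast
      then show False using mono[of x y] mono[of y x] xy by auto
    qed
  qed
  have sub: "?r ` S \<subseteq> {..<card S}"
  proof
    fix m assume "m \<in> ?r ` S"
    then obtain x where x: "x \<in> S" "m = ?r x" by blast
    have "{y\<in>S. P y x} \<subset> S" using x irr by blast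
    then have "?r x < card S" by (rule psubset_card_mono[OF fin])
    then show "m \<in> {..<card S}" using x by simp
  qed
  have "card (?r ` S) = card {..<card S}" using card_image[OF inj] by simp
  then have "?r ` S = {..<card S}" using card_subset_eq[OF _ sub] by simp
  then show ?thesis using inj by simp
qed

lemma rank_count:
  assumes fin: "finite S"
    and irr: "\<And>x. x \<in> S \<Longrightarrow> \<not> P x x"
    and tr: "\<And>x y z. x \<in> S \<Longrightarrow> y \<in> S \<Longrightarrow> z \<in> S \<Longrightarrow> P x y \<Longrightarrow> P y z \<Longrightarrow> P x z"
    and tot: "\<And>x y. x \<in> S \<Longrightarrow> y \<in> S \<Longrightarrow> x \<noteq> y \<Longrightarrow> P x y \<or> P y x"
  shows "card {x\<in>S. Q (card {y\<in>S. P y x})} = card {m. m < card S \<and> Q m}"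
proof -
  let ?r = "\<lambda>x. card {y\<in>S. P y x}"
  have rp: "inj_on ?r S" "?r ` S = {..<card S}" using rank_props[OF assms] by auto
  have "card {x\<in>S. Q (?r x)} = card (?r ` {x\<in>S. Q (?r x)})"
    by (rule card_image[symmetric]) (rule inj_on_subset[OF rp(1)], auto)
  also have "?r ` {x\<in>S. Q (?r x)} = {m \<in> ?r ` S. Q m}" by auto
  also have "\<dots> = {m. m < card S \<and> Q m}" unfolding rp(2) by auto
  finally show ?thesis .
qed

lemma card_thresh: "card {m::nat. m < c \<and> a + m < b} = min c (b - a)"
proof -
  have "{m::nat. m < c \<and> a + m < b} = {..<min c (b - a)}" by auto
  then show ?thesis by simp
qed

lemma sym_idx_inj: "inj sym_idx"
proof (rule injI)
  fix x y show "sym_idx x = sym_idx y \<Longrightarrow> x = y" by (cases x; cases y) simp_all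
qed

lemma lex_irr: "\<not> sym_lex_less v v"
  unfolding sym_lex_less_def by (rule lexord_irreflexive) simp

lemma lex_trans: "sym_lex_less x y \<Longrightarrow> sym_lex_less y z \<Longrightarrow> sym_lex_less x z"
  unfolding sym_lex_less_def
proof -
  assume "(map sym_idx x, map sym_idx y) \<in> lexord {(a, b). a < b}" "(map sym_idx y, map sym_idx z) \<in> lexord {(a, b). a < b}"
  moreover have "Relation.trans {(a::nat, b). a < b}" by (auto intro: transI)
  ultimately show "(map sym_idx x, map sym_idx z) \<in> lexord {(a, b). a < b}" by (rule lexord_trans)
qed

lemma lex_tot: "x \<noteq> y \<Longrightarrow> sym_lex_less x y \<or> sym_lex_less y x"
proof -
  assume "x \<noteq> y"
  then have ne: "map sym_idx x \<noteq> map sym_idx y" using inj_map_eq_map[OF sym_idx_inj] by simp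
  have "\<forall>a b. (a, b) \<in> {(a::nat, b). a < b} \<or> a = b \<or> (b, a) \<in> {(a::nat, b). a < b}" by auto
  then have "(map sym_idx x, map sym_idx y) \<in> lexord {(a, b). a < b} \<or> map sym_idx x = map sym_idx y \<or>
      (map sym_idx y, map sym_idx x) \<in> lexord {(a, b). a < b}" by (rule lexord_linear)
  then show ?thesis using ne unfolding sym_lex_less_def by blast
qed

lemma prec_adm: "admissible v \<Longrightarrow> admissible u \<Longrightarrow> adm_prec v u \<longleftrightarrow>
   kk v < kk u \<or> (kk v = kk u \<and> (length v < length u \<or> (length v = length u \<and> sym_lex_less v u)))"
  unfolding adm_prec_def using Kc_adm[of u] Kc_adm[of v] by simp

lemma good_iff:
  assumes u: "u \<in> Lev (h + 2) n"
  shows "(real (length (code u)) = Kc u - 1) \<longleftrightarrow>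
    card {v. admissible v \<and> kk v = h + 2 \<and> length v < n} + card {v \<in> Lev (h + 2) n. sym_lex_less v u} < 2 * JJ h"
proof -
  have au: "admissible u" "kk u = h + 2" "length u = n" using u by (auto simp: Lev_def)
  let ?L = "{v. admissible v \<and> kk v < h + 2}"
  let ?S = "{v. admissible v \<and> kk v = h + 2 \<and> length v < n}"
  let ?X = "{v \<in> Lev (h + 2) n. sym_lex_less v u}"
  have e: "{v. admissible v \<and> adm_prec v u} = ?L \<union> ?S \<union> ?X"
  proof (intro set_eqI iffI)
    fix v assume "v \<in> {v. admissible v \<and> adm_prec v u}"
    then have "admissible v" "adm_prec v u" by auto
    then show "v \<in> ?L \<union> ?S \<union> ?X" using prec_adm[of v u] au by (auto simp: Lev_def)
  next
    fix v assume "v \<in> ?L \<union> ?S \<union> ?X"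
    then have "admissible v" by (auto simp: Lev_def)
    then show "v \<in> {v. admissible v \<and> adm_prec v u}" using prec_adm[of v u] au \<open>v \<in> ?L \<union> ?S \<union> ?X\<close> by (auto simp: Lev_def)
  qed
  have fL: "finite ?L" by (rule fin_low)
  have fS: "finite ?S" by (rule fin_level)
  have fX: "finite ?X" using fin_Lev by simp
  have "card (?L \<union> ?S \<union> ?X) = card (?L \<union> ?S) + card ?X"
    by (rule card_Un_disjoint) (use fL fS fX in \<open>auto simp: Lev_def\<close>)
  also have "card (?L \<union> ?S) = card ?L + card ?S"
    by (rule card_Un_disjoint) (use fL fS in auto)
  finally have ci: "adm_index u = card ?L + card ?S + card ?X + 1"
    unfolding adm_index_def e by simp
  have lc: "card ?L + 2 + 2 * JJ h = 2 ^ (h + 2)" by (rule low_cnt)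
  have jl: "JJ h \<le> 2 ^ h" by (rule JJ_le)
  have "real (length (code u)) = Kc u - 1 \<longleftrightarrow> length (code u) = h + 1"
    using Kc_adm[OF au(1)] au(2) by auto
  also have "\<dots> \<longleftrightarrow> 2 ^ (h + 1) \<le> adm_index u + 1 \<and> adm_index u + 1 < 2 ^ Suc (h + 1)"
    unfolding code_def by (rule code_length_iff) (simp add: adm_index_def)
  also have "\<dots> \<longleftrightarrow> card ?S + card ?X < 2 * JJ h"
    unfolding ci using lc jl by (auto simp: power_add)
  finally show ?thesis .
qed

lemma good_count:
  "card {u \<in> Lev (h + 2) n. real (length (code u)) = Kc u - 1} =
   min (card (Lev (h + 2) n)) (2 * JJ h - card {v. admissible v \<and> kk v = h + 2 \<and> length v < n})"
proof -
  let ?c = "card {v. admissible v \<and> kk v = h + 2 \<and> length v < n}"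
  have seteq: "{u \<in> Lev (h + 2) n. real (length (code u)) = Kc u - 1} =
      {u \<in> Lev (h + 2) n. ?c + card {v \<in> Lev (h + 2) n. sym_lex_less v u} < 2 * JJ h}"
  proof (rule Collect_cong)
    fix u show "(u \<in> Lev (h + 2) n \<and> real (length (code u)) = Kc u - 1) =
       (u \<in> Lev (h + 2) n \<and> ?c + card {v \<in> Lev (h + 2) n. sym_lex_less v u} < 2 * JJ h)"
      using good_iff[of u h n] by blast
  qed
  have "card {u \<in> Lev (h + 2) n. ?c + card {v \<in> Lev (h + 2) n. sym_lex_less v u} < 2 * JJ h} = card {m. m < card (Lev (h + 2) n) \<and> ?c + m < 2 * JJ h}"
  proof (rule rank_count[where P="\<lambda>v u. sym_lex_less v u" and Q="\<lambda>m. ?c + m < 2 * JJ h"])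
    show "finite (Lev (h + 2) n)" by (rule fin_Lev)
    show "\<And>x. \<not> sym_lex_less x x" by (rule lex_irr)
    show "\<And>x y z. sym_lex_less x y \<Longrightarrow> sym_lex_less y z \<Longrightarrow> sym_lex_less x z" by (rule lex_trans)
    show "\<And>x y. x \<noteq> y \<Longrightarrow> sym_lex_less x y \<or> sym_lex_less y x" by (rule lex_tot)
  qed
  also have "\<dots> = min (card (Lev (h + 2) n)) (2 * JJ h - ?c)" by (rule card_thresh)
  finally show ?thesis unfolding seteq .
qed

definition gg :: "nat \<Rightarrow> nat \<Rightarrow> nat" where
  "gg N i = min (4 * TT (N + i) i) (2 * JJ (N + i) - 4 * (JJ (N + i) - Hd (N + i) (Suc i)))"

lemma sum_Lev_good:
  "(\<Sum>u\<in>Lev k n. if real (length (code u)) = Kc u - 1 then str_prob u else 0) =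
   (1/2) ^ k * real (card {u \<in> Lev k n. real (length (code u)) = Kc u - 1})"
proof -
  have "(\<Sum>u\<in>Lev k n. if real (length (code u)) = Kc u - 1 then str_prob u else 0) =
     (\<Sum>u\<in>Lev k n. if real (length (code u)) = Kc u - 1 then (1/2) ^ k else 0)"
  proof (rule sum.cong)
    fix u assume "u \<in> Lev k n"
    then have "admissible u" "kk u = k" by (auto simp: Lev_def)
    then show "(if real (length (code u)) = Kc u - 1 then str_prob u else 0) =
        (if real (length (code u)) = Kc u - 1 then (1/2) ^ k else 0)" using str_prob_adm by simp
  qed simp
  also have "\<dots> = (\<Sum>u\<in>{u \<in> Lev k n. real (length (code u)) = Kc u - 1}. (1/2) ^ k)"
    by (rule sum.inter_filter[symmetric]) (rule fin_Lev)
  also have "\<dots> = (1/2) ^ k * real (card {u \<in> Lev k n. real (length (code u)) = Kc u - 1})"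
    by simp
  finally show ?thesis .
qed

lemma card_good_gg:
  "card {u \<in> Lev (N + i + 2) (Suc N). real (length (code u)) = Kc u - 1} = gg N i"
proof -
  have c1: "card (Lev (N + i + 2) (Suc N)) = 4 * TT (N + i) i"
    using cnt_Lev_TT[of N "N + i"] by simp
  have c2: "card {v. admissible v \<and> kk v = N + i + 2 \<and> length v < Suc N} = 4 * (JJ (N + i) - Hd (N + i) (Suc i))"
    using short_cnt[of "N + i" "Suc N"] by simp
  show ?thesis using good_count[of "N + i" "Suc N"] unfolding c1 c2 gg_def by simp
qed

lemma prob_sum: "prob_I (Suc N) = (\<Sum>i\<le>N. (1/2) ^ (N + i + 2) * real (gg N i))"
proof -
  let ?U = "{u. length u = Suc N \<and> admissible u}"
  let ?f = "\<lambda>u. if real (length (code u)) = Kc u - 1 then str_prob u else 0"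
  have fU: "finite ?U" by (rule fin_sub[of _ "Suc N"]) simp
  have img: "(\<lambda>u. kk u - (N + 2)) ` ?U \<subseteq> {..N}"
  proof
    fix m assume "m \<in> (\<lambda>u. kk u - (N + 2)) ` ?U"
    then obtain u where u: "u \<in> ?U" "m = kk u - (N + 2)" by blast
    then have "u \<noteq> []" by auto
    then have "kk u \<le> 2 * length u" using kk_bounds by blast
    then show "m \<in> {..N}" using u by simp
  qed
  have grp: "(\<Sum>i\<le>N. sum ?f {u. u \<in> ?U \<and> kk u - (N + 2) = i}) = sum ?f ?U"
    by (rule sum.group[OF fU _ img]) simp
  have sets: "{u. u \<in> ?U \<and> kk u - (N + 2) = i} = Lev (N + i + 2) (Suc N)" for i
  proof (intro set_eqI iffI)
    fix u assume "u \<in> {u. u \<in> ?U \<and> kk u - (N + 2) = i}"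
    then show "u \<in> Lev (N + i + 2) (Suc N)" using kk_len[of u] by (auto simp: Lev_def)
  next
    fix u assume "u \<in> Lev (N + i + 2) (Suc N)"
    then show "u \<in> {u. u \<in> ?U \<and> kk u - (N + 2) = i}" by (auto simp: Lev_def)
  qed
  have "prob_I (Suc N) = sum ?f ?U" unfolding prob_I_def by (rule sum.cong) auto
  also have "\<dots> = (\<Sum>i\<le>N. sum ?f (Lev (N + i + 2) (Suc N)))" unfolding grp[symmetric] sets ..
  also have "\<dots> = (\<Sum>i\<le>N. (1/2) ^ (N + i + 2) * real (gg N i))"
    unfolding sum_Lev_good card_good_gg ..
  finally show ?thesis .
qed

lemma gg_int: "int (gg N i) = min (4 * int (TT (N + i) i)) (max 0 (2 * EE (N + i) (Suc i)))"
proof -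
  let ?h = "N + i"
  have le: "Hd ?h (Suc i) \<le> JJ ?h" by (rule Hd_le_J)
  have "int (2 * JJ ?h - 4 * (JJ ?h - Hd ?h (Suc i))) = max 0 (2 * EE ?h (Suc i))"
    unfolding EE_def using le by (simp add: of_nat_diff max_def)
  then show ?thesis unfolding gg_def by (simp add: min_def)
qed

lemma TT_pos: "i \<le> N \<Longrightarrow> TT (N + i) i > 0"
  unfolding TT_diag by simp

lemma F2_int: "N + 2 \<le> 2 * i \<Longrightarrow> gg N i = 4 * TT (N + i) i"
proof -
  assume a: "N + 2 \<le> 2 * i"
  have "EE (N + i) i > 0" by (rule P1) (use a in simp_all)
  then have "EE (N + i) (Suc i) > 2 * int (TT (N + i) i)" using E_step[of "N + i" i] by simp
  then have "int (gg N i) = 4 * int (TT (N + i) i)" unfolding gg_int by simp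
  then show ?thesis by simp
qed

lemma F3_int: "2 * int (TT (3 * p) p) \<le> int (gg (2 * p) p) \<and> (1 \<le> p \<longrightarrow> 2 * int (TT (3 * p) p) < int (gg (2 * p) p))"
proof -
  have e: "2 * p + p = 3 * p" by simp
  have g: "int (gg (2 * p) p) = min (4 * int (TT (3 * p) p)) (max 0 (2 * EE (3 * p) (Suc p)))"
    using gg_int[of "2 * p" p] unfolding e .
  have tp: "TT (3 * p) p > 0" using TT_pos[of p "2 * p"] unfolding e by simp
  show ?thesis using P2[of p] tp unfolding g by auto
qed

lemma F4_int: "8 * int (TT (3 * p + 1) p) < 2 * int (gg (2 * p + 1) p) + int (gg (2 * p + 1) (Suc p))"
proof -
  let ?T = "int (TT (3 * p + 1) p)"
  let ?e = "EE (3 * p + 1) (Suc p)"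
  have e1: "2 * p + 1 + p = 3 * p + 1" and e2: "2 * p + 1 + Suc p = 3 * p + 2" by simp_all
  have g1: "int (gg (2 * p + 1) p) = min (4 * ?T) (max 0 (2 * ?e))"
    using gg_int[of "2 * p + 1" p] unfolding e1 .
  have g2: "int (gg (2 * p + 1) (Suc p)) = min (4 * int (TT (3 * p + 2) (Suc p))) (max 0 (2 * EE (3 * p + 2) (Suc (Suc p))))"
    using gg_int[of "2 * p + 1" "Suc p"] unfolding e2 .
  have t2: "TT (3 * p + 2) (Suc p) = 2 * TT (3 * p + 1) p"
  proof -
    have a: "TT (3 * p + 2) (Suc p) = (2 * p + 1 choose Suc p) * 2 ^ Suc p" using TT_diag[of "2 * p + 1" "Suc p"] unfolding e2 .
    have b: "TT (3 * p + 1) p = (2 * p + 1 choose p) * 2 ^ p" using TT_diag[of "2 * p + 1" p] unfolding e1 .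
    have "(2 * p + 1 choose Suc p) = (2 * p + 1 choose p)"
      using binomial_symmetric[of "Suc p" "2 * p + 1"] by simp
    then show ?thesis unfolding a b by simp
  qed
  have epos: "?e > 0" by (rule P1) simp_all
  have p3: "EE (3 * p + 2) (Suc p) + ?e = 0" by (rule P3)
  have s2: "EE (3 * p + 2) (Suc (Suc p)) = EE (3 * p + 2) (Suc p) + 2 * int (TT (3 * p + 2) (Suc p))"
    by (rule E_step)
  have pos2: "EE (3 * p + 2) (Suc (Suc p)) > 0" by (rule P1) simp_all
  have E2: "EE (3 * p + 2) (Suc (Suc p)) = 4 * ?T - ?e" using s2 p3 t2 by simp
  have g2': "int (gg (2 * p + 1) (Suc p)) = 8 * ?T - 2 * ?e"
    unfolding g2 E2 t2 using epos pos2 E2 by simp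
  show ?thesis unfolding g1 g2' using epos pos2 E2 by (simp add: min_def max_def)
qed

definition dd :: "nat \<Rightarrow> nat \<Rightarrow> real" where
  "dd N i = (1/2) ^ (N + i + 2) * (real (gg N i) - 2 * real (TT (N + i) i))"

definition ww :: "nat \<Rightarrow> nat \<Rightarrow> real" where
  "ww N i = real (N choose i) / 2 ^ (N + 1)"

lemma ww_eq: "(1/2::real) ^ (N + i + 2) * (2 * real (TT (N + i) i)) = ww N i"
proof -
  have a: "(1/2::real) ^ (N + i + 2) = 1 / (2 ^ (N + 1) * 2 ^ Suc i)"
    by (simp add: power_add power_one_over)
  show ?thesis unfolding a ww_def TT_diag by (simp add: field_simps)
qed

lemma ww_sym: "i \<le> N \<Longrightarrow> ww N (N - i) = ww N i"
  unfolding ww_def using binomial_symmetric[of i N] by simp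

lemma ww_sum: "(\<Sum>i\<le>N. ww N i) = 1/2"
proof -
  have "(\<Sum>i\<le>N. ww N i) = (\<Sum>i\<le>N. real (N choose i)) / 2 ^ (N + 1)"
    unfolding ww_def by (simp add: sum_divide_distrib)
  also have "(\<Sum>i\<le>N. real (N choose i)) = 2 ^ N"
    using choose_row_sum[of N] by (metis of_nat_numeral of_nat_power of_nat_sum)
  finally show ?thesis by simp
qed

lemma dd_lower: "dd N i \<ge> - ww N i"
proof -
  have "dd N i = (1/2) ^ (N + i + 2) * real (gg N i) - (1/2) ^ (N + i + 2) * (2 * real (TT (N + i) i))"
    unfolding dd_def by (simp add: algebra_simps)
  then show ?thesis unfolding ww_eq by simp
qed

lemma dd_F2: "N + 2 \<le> 2 * i \<Longrightarrow> dd N i = ww N i"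
proof -
  assume a: "N + 2 \<le> 2 * i"
  have "dd N i = (1/2) ^ (N + i + 2) * (2 * real (TT (N + i) i))"
    unfolding dd_def F2_int[OF a] by simp
  then show ?thesis unfolding ww_eq .
qed

lemma dd_F3: "0 \<le> dd (2 * p) p \<and> (1 \<le> p \<longrightarrow> 0 < dd (2 * p) p)"
proof -
  have e: "2 * p + p = 3 * p" by simp
  have f: "2 * real (TT (3 * p) p) \<le> real (gg (2 * p) p) \<and> (1 \<le> p \<longrightarrow> 2 * real (TT (3 * p) p) < real (gg (2 * p) p))"
    using F3_int[of p] by linarith
  show ?thesis unfolding dd_def e using f by auto
qed

lemma dd_F4: "0 < dd (2 * p + 1) p + dd (2 * p + 1) (Suc p)"
proof -
  let ?T = "real (TT (3 * p + 1) p)"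
  have e1: "2 * p + 1 + p = 3 * p + 1" and e2: "2 * p + 1 + Suc p = 3 * p + 2" by simp_all
  have t2: "TT (3 * p + 2) (Suc p) = 2 * TT (3 * p + 1) p"
  proof -
    have a: "TT (3 * p + 2) (Suc p) = (2 * p + 1 choose Suc p) * 2 ^ Suc p" using TT_diag[of "2 * p + 1" "Suc p"] unfolding e2 .
    have b: "TT (3 * p + 1) p = (2 * p + 1 choose p) * 2 ^ p" using TT_diag[of "2 * p + 1" p] unfolding e1 .
    have "(2 * p + 1 choose Suc p) = (2 * p + 1 choose p)"
      using binomial_symmetric[of "Suc p" "2 * p + 1"] by simp
    then show ?thesis unfolding a b by simp
  qed
  have f: "8 * ?T < 2 * real (gg (2 * p + 1) p) + real (gg (2 * p + 1) (Suc p))"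
    using F4_int[of p] by linarith
  have pw: "(1/2::real) ^ (2 * p + 1 + Suc p + 2) = (1/2) ^ (2 * p + 1 + p + 2) / 2" by simp
  have eq: "dd (2 * p + 1) p + dd (2 * p + 1) (Suc p) =
      (1/2) ^ (2 * p + 1 + p + 2) / 2 * (2 * real (gg (2 * p + 1) p) + real (gg (2 * p + 1) (Suc p)) - 8 * ?T)"
    unfolding dd_def pw unfolding e1 e2 t2 by (simp add: algebra_simps)
  show ?thesis unfolding eq by (rule mult_pos_pos) (use f in simp_all)
qed

lemma q_nonneg: "i \<le> N \<Longrightarrow> 0 \<le> dd N i + dd N (N - i)"
proof -
  assume iN: "i \<le> N"
  show ?thesis
  proof (cases "N + 2 \<le> 2 * i")
    case True
    then show ?thesis using dd_F2[OF True] dd_lower[of N "N - i"] ww_sym[OF iN] by simp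
  next
    case c1: False
    show ?thesis
    proof (cases "N + 2 \<le> 2 * (N - i)")
      case True
      then show ?thesis using dd_F2[OF True] dd_lower[of N i] ww_sym[OF iN] by simp
    next
      case c2: False
      obtain p where "N = 2 * p \<or> N = 2 * p + 1" by (metis odd_two_times_div_two_succ even_two_times_div_two)
      then show ?thesis
      proof
        assume N: "N = 2 * p"
        then have "i = p" using c1 c2 iN by presburger
        then show ?thesis using dd_F3[of p] N by simp
      next
        assume N: "N = 2 * p + 1"
        then have "i = p \<or> i = Suc p" using c1 c2 iN by presburger
        then show ?thesis using dd_F4[of p] N by auto
      qed
    qed
  qed
qed

lemma q_pos: "1 \<le> N \<Longrightarrow> 0 < dd N (N div 2) + dd N (N - N div 2)"
proof -
  assume N1: "1 \<le> N"
  obtain p where "N = 2 * p \<or> N = 2 * p + 1" by (metis odd_two_times_div_two_succ even_two_times_div_two)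
  then show ?thesis
  proof
    assume N: "N = 2 * p"
    then have "1 \<le> p" using N1 by simp
    then show ?thesis using dd_F3[of p] N by simp
  next
    assume N: "N = 2 * p + 1"
    then have "N div 2 = p" "N - N div 2 = Suc p" by simp_all
    then show ?thesis using dd_F4[of p] N by simp
  qed
qed

theorem mainTheorem12:
  fixes n :: nat
  assumes "n \<ge> 1"
  shows "prob_I n \<ge> 1/2 \<and> (n \<ge> 2 \<longrightarrow> prob_I n > 1/2)"
proof -
  obtain N where n: "n = Suc N" using assms by (metis Suc_le_D One_nat_def)
  have p: "prob_I n = 1/2 + (\<Sum>i\<le>N. dd N i)"
  proof -
    have "prob_I n = (\<Sum>i\<le>N. (1/2) ^ (N + i + 2) * real (gg N i))" unfolding n by (rule prob_sum)
    also have "\<dots> = (\<Sum>i\<le>N. ww N i + dd N i)"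
    proof (rule sum.cong)
      fix i assume "i \<in> {..N}"
      show "(1/2) ^ (N + i + 2) * real (gg N i) = ww N i + dd N i"
        unfolding ww_eq[symmetric] dd_def by (simp add: algebra_simps)
    qed simp
    also have "\<dots> = 1/2 + (\<Sum>i\<le>N. dd N i)" by (simp add: sum.distrib ww_sum)
    finally show ?thesis .
  qed
  have rev: "(\<Sum>i\<le>N. dd N i) = (\<Sum>i\<le>N. dd N (N - i))"
    using sum.atLeastAtMost_rev[of "dd N" 0 N] by (simp add: atLeast0AtMost)
  have two: "2 * (\<Sum>i\<le>N. dd N i) = (\<Sum>i\<le>N. dd N i + dd N (N - i))"
    using rev by (simp add: sum.distrib)
  have nn: "0 \<le> (\<Sum>i\<le>N. dd N i + dd N (N - i))"
    by (rule sum_nonneg) (simp add: q_nonneg)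
  have "0 \<le> (\<Sum>i\<le>N. dd N i)" using two nn by simp
  moreover have "n \<ge> 2 \<longrightarrow> 0 < (\<Sum>i\<le>N. dd N i)"
  proof
    assume "n \<ge> 2"
    then have N1: "1 \<le> N" using n by simp
    have "0 < (\<Sum>i\<le>N. dd N i + dd N (N - i))"
    proof (rule sum_pos2)
      show "finite {..N}" by simp
      show "N div 2 \<in> {..N}" by simp
      show "0 < dd N (N div 2) + dd N (N - N div 2)" by (rule q_pos[OF N1])
      show "\<And>i. i \<in> {..N} \<Longrightarrow> 0 \<le> dd N i + dd N (N - i)" by (simp add: q_nonneg)
    qed
    then show "0 < (\<Sum>i\<le>N. dd N i)" using two by simp
  qed
  ultimately show ?thesis using p by simp
qed

end
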